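(* (i) Let $H_0 \subset \mathbb{S}^n$ be a hemisphere. Any family $(H_i)_{i \in I}$ of hemispheres such that the sets $H_0 \cap H_i$, $i\in I$, are non-empty and pairwise disjoint has cardinality at most $2$. (ii) Let $\min(p,q)\ge 2$ and let $M_0 \subset \widetilde{\mathrm{Ein}}^{p,q}$ be a Minkowski patch. Any family $(M_i)_{i\in I}$ of Minkowski patches such that the sets $M_0 \cap M_i$, $i \in I$, are non-empty and pairwise disjoint has cardinality at most $2$.
   Context: A hemisphere of $\mathbb{S}^n\subset\mathbb{R}^{n+1}$ is $\mathbb{S}^n\cap\{\ell>0\}$ for a nonzero linear form $\ell$. $\widetilde{\mathrm{Ein}}^{p,q}\cong\mathbb{S}^p\times\mathbb{S}^q$ is the set of isotropic vectors of Euclidean norm 1 of $\mathbb{R}^{p+1,q+1}$, double covering $\mathrm{Ein}^{p,q}$ (isotropic lines) via $\pi_{\mathbf{X}}$. A Minkowski patch of $\widetilde{\mathrm{Ein}}^{p,q}$ is a connected component of $\pi_{\mathbf{X}}^{-1}(M_x)$ with $M_x=\{[w]:B(v,w)\ne 0\}$ for an isotropic $v$, $x=[v]$. *)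

theory Defs
  imports "HOL-Analysis.Analysis"
begin

definition hemisphere :: "'a::euclidean_space set \<Rightarrow> bool" where
  "hemisphere H \<longleftrightarrow>
     (\<exists>l::'a \<Rightarrow> real. linear l \<and> l \<noteq> (\<lambda>_. 0) \<and> H = sphere 0 1 \<inter> {x. l x > 0})"

text \<open>R^{p+1,q+1} modelled as 'a \<times> 'b with DIM('a) = p+1, DIM('b) = q+1,
  and the bilinear form B of signature (p+1,q+1).\<close>
definition bform :: "('a::euclidean_space \<times> 'b::euclidean_space) \<Rightarrow> ('a \<times> 'b) \<Rightarrow> real" where
  "bform u w = fst u \<bullet> fst w - snd u \<bullet> snd w"

text \<open>The double cover of Ein: isotropic vectors of Euclidean norm 1.\<close>
definition EinT :: "('a::euclidean_space \<times> 'b::euclidean_space) set" where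
  "EinT = {w. bform w w = 0 \<and> norm w = 1}"

definition piX :: "('a::euclidean_space \<times> 'b::euclidean_space) \<Rightarrow> ('a \<times> 'b) set" where
  "piX w = span {w}"

definition Mx :: "('a::euclidean_space \<times> 'b::euclidean_space) \<Rightarrow> ('a \<times> 'b) set set" where
  "Mx v = {L. \<exists>w. w \<noteq> 0 \<and> bform w w = 0 \<and> L = span {w} \<and> bform v w \<noteq> 0}"

definition minkowski_patch :: "('a::euclidean_space \<times> 'b::euclidean_space) set \<Rightarrow> bool" where
  "minkowski_patch M \<longleftrightarrow>
     (\<exists>v. v \<noteq> 0 \<and> bform v v = 0 \<and>
        (\<exists>w \<in> EinT \<inter> piX -` Mx v.
           M = connected_component_set (EinT \<inter> piX -` Mx v) w))"

end

theory Submission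
  imports Defs
begin


lemma bform_add_left[simp]: "bform (x+y) z = bform x z + bform y z"
  by (simp add: bform_def inner_add_left)
lemma bform_add_right[simp]: "bform z (x+y) = bform z x + bform z y"
  by (simp add: bform_def inner_add_right)
lemma bform_diff_left[simp]: "bform (x-y) z = bform x z - bform y z"
  by (simp add: bform_def inner_diff_left)
lemma bform_diff_right[simp]: "bform z (x-y) = bform z x - bform z y"
  by (simp add: bform_def inner_diff_right)
lemma bform_minus_left[simp]: "bform (-x) z = - bform x z"
  by (simp add: bform_def)
lemma bform_minus_right[simp]: "bform z (-x) = - bform z x"
  by (simp add: bform_def)
lemma bform_scaleR_left[simp]: "bform (c *\<^sub>R x) z = c * bform x z"
  by (simp add: bform_def algebra_simps)
lemma bform_scaleR_right[simp]: "bform z (c *\<^sub>R x) = c * bform z x"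
  by (simp add: bform_def algebra_simps)
lemma bform_zero_left[simp]: "bform 0 z = 0" by (simp add: bform_def)
lemma bform_zero_right[simp]: "bform z 0 = 0" by (simp add: bform_def)
lemma bform_sym: "bform x y = bform y x" by (simp add: bform_def inner_commute)

lemma linear_bform: "linear (\<lambda>x. bform a x)"
  by (rule linearI) simp_all

lemma continuous_on_bform: "continuous_on S (\<lambda>x. bform a x)"
  unfolding bform_def by (intro continuous_intros)

lemma ev_quad:
  fixes A B C :: real
  assumes "A > 0"
  shows "eventually (\<lambda>t. A*t^2+B*t+C > 0) at_top"
proof -
  have "eventually (\<lambda>t. t \<ge> (\<bar>B\<bar>+\<bar>C\<bar>+1)/A + 1) at_top" by (rule eventually_ge_at_top)
  then show ?thesis
  proof (rule eventually_mono)
    fix t assume t: "t \<ge> (\<bar>B\<bar>+\<bar>C\<bar>+1)/A + 1"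
    have "(\<bar>B\<bar>+\<bar>C\<bar>+1)/A \<ge> 0" using assms by simp
    hence t1: "t \<ge> 1" using t by linarith
    have "A*t \<ge> \<bar>B\<bar>+\<bar>C\<bar>+1" using t assms by (simp add: field_simps)
    hence "(\<bar>B\<bar>+\<bar>C\<bar>+1)*t \<le> (A*t)*t" by (rule mult_right_mono) (use t1 in auto)
    hence h1: "A*t*t \<ge> \<bar>B\<bar>*t+\<bar>C\<bar>*t+t" by (simp add: distrib_right)
    have h2: "(-\<bar>B\<bar>)*t \<le> B*t" by (rule mult_right_mono) (use t1 in auto)
    have "\<bar>C\<bar>*1 \<le> \<bar>C\<bar>*t" by (rule mult_left_mono) (use t1 in auto)
    hence h3: "C \<ge> -\<bar>C\<bar>*t" by linarith
    have "A*t^2 = A*t*t" by (simp add: power2_eq_square)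
    then show "A*t^2+B*t+C > 0" using h1 h2 h3 t1 by linarith
  qed
qed

lemma ev_lin:
  fixes B C :: real
  assumes "B > 0"
  shows "eventually (\<lambda>t. B*t+C > 0) at_top"
proof -
  have "eventually (\<lambda>t. t \<ge> (\<bar>C\<bar>+1)/B) at_top" by (rule eventually_ge_at_top)
  then show ?thesis
  proof (rule eventually_mono)
    fix t assume t: "t \<ge> (\<bar>C\<bar>+1)/B"
    have "B*t \<ge> \<bar>C\<bar>+1" using t assms by (simp add: field_simps)
    then show "B*t+C > 0" by linarith
  qed
qed

lemma ev_both:
  assumes "eventually P (at_top::real filter)" "eventually Q at_top"
  obtains t where "P t" "Q t"
proof -
  have "eventually (\<lambda>t. P t \<and> Q t) at_top" using assms eventually_conj by blast
  then obtain N where "\<forall>n\<ge>N. P n \<and> Q n" unfolding eventually_at_top_linorder by blast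
  then have "P N \<and> Q N" by simp
  then obtain t where "P t \<and> Q t" by blast
  then show ?thesis using that by blast
qed

lemma strict_opp:
  fixes a b :: "'a::real_vector \<Rightarrow> real"
  assumes "subspace S" "linear a" "linear b" "e \<in> S" "b e > 0"
    and disj: "\<forall>x\<in>S. \<not> (a x > 0 \<and> b x > 0)"
    and "x \<in> S" "a x > 0"
  shows "b x < 0"
proof (rule ccontr)
  assume "\<not> b x < 0"
  define \<epsilon> where "\<epsilon> = a x / (2*(\<bar>a e\<bar>+1))"
  have \<epsilon>: "\<epsilon> > 0" using assms unfolding \<epsilon>_def by simp
  have e1: "\<epsilon> * (\<bar>a e\<bar>+1) = a x / 2" unfolding \<epsilon>_def by (simp add: field_simps)
  have e2: "\<epsilon> * \<bar>a e\<bar> \<le> \<epsilon> * (\<bar>a e\<bar>+1)" using \<epsilon> by simp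
  have e3: "\<epsilon> * (-\<bar>a e\<bar>) \<le> \<epsilon> * a e" by (rule mult_left_mono) (use \<epsilon> in auto)
  have "a (x + \<epsilon> *\<^sub>R e) = a x + \<epsilon> * a e" using assms by (simp add: linear_add linear_scale)
  hence "a (x + \<epsilon> *\<^sub>R e) > 0" using e1 e2 e3 assms by simp
  moreover have "b (x + \<epsilon> *\<^sub>R e) > 0"
  proof -
    have "\<epsilon> * b e > 0" using assms \<epsilon> by simp
    thus ?thesis using assms \<open>\<not> b x < 0\<close> by (simp add: linear_add linear_scale)
  qed
  moreover have "x + \<epsilon> *\<^sub>R e \<in> S" using assms by (simp add: subspace_add subspace_scale)
  ultimately show False using disj by blast
qed

lemma three_halfspaces:
  fixes l1 l2 l3 :: "'a::real_vector \<Rightarrow> real"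
  assumes S: "subspace S" and l: "linear l1" "linear l2" "linear l3"
    and x: "x1 \<in> S" "l1 x1 > 0" "x2 \<in> S" "l2 x2 > 0" "x3 \<in> S" "l3 x3 > 0"
    and d12: "\<forall>x\<in>S. \<not> (l1 x > 0 \<and> l2 x > 0)"
    and d13: "\<forall>x\<in>S. \<not> (l1 x > 0 \<and> l3 x > 0)"
    and d23: "\<forall>x\<in>S. \<not> (l2 x > 0 \<and> l3 x > 0)"
  shows False
proof -
  have d21: "\<forall>x\<in>S. \<not> (l2 x > 0 \<and> l1 x > 0)" and d32: "\<forall>x\<in>S. \<not> (l3 x > 0 \<and> l2 x > 0)"
    using d12 d23 by auto
  have a1: "l2 x1 < 0" by (rule strict_opp[OF S l(1) l(2) x(3,4) d12 x(1,2)])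
  have a2: "l3 x1 < 0" by (rule strict_opp[OF S l(1) l(3) x(5,6) d13 x(1,2)])
  have a3: "l3 x2 < 0" by (rule strict_opp[OF S l(2) l(3) x(5,6) d23 x(3,4)])
  define z where "z = l2 x2 *\<^sub>R x1 - l2 x1 *\<^sub>R x2"
  have zS: "-z \<in> S" unfolding z_def using S x by (simp add: subspace_neg subspace_diff subspace_scale)
  have "l2 z = 0" unfolding z_def using l by (simp add: linear_diff linear_scale)
  hence l2z: "l2 (-z) = 0" using l by (simp add: linear_neg)
  have "l3 z = l2 x2 * l3 x1 - l2 x1 * l3 x2" unfolding z_def using l by (simp add: linear_diff linear_scale)
  also have "\<dots> < 0"
  proof -
    have "l2 x2 * l3 x1 < 0" using a2 x by (simp add: mult_pos_neg)
    moreover have "l2 x1 * l3 x2 > 0" using a1 a3 by (simp add: mult_neg_neg)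
    ultimately show ?thesis by linarith
  qed
  finally have "l3 (-z) > 0" using l by (simp add: linear_neg)
  hence "l2 (-z) < 0" by (rule strict_opp[OF S l(3) l(2) x(3,4) d32 zS])
  with l2z show False by simp
qed



lemma three_of:
  assumes "\<not> (finite I \<and> card I \<le> 2)"
  shows "\<exists>i j k. i\<in>I \<and> j\<in>I \<and> k\<in>I \<and> i\<noteq>j \<and> i\<noteq>k \<and> j\<noteq>k"
proof -
  obtain T where T: "T \<subseteq> I" "card T = 3"
  proof (cases "finite I")
    case True
    then have "3 \<le> card I" using assms by simp
    then show ?thesis using obtain_subset_with_card_n that by metis
  next
    case False
    then show ?thesis using infinite_arbitrarily_large that by metis
  qed
  then show ?thesis unfolding card_3_iff by blast
qed

lemma pos_vec:
  fixes l :: "'a::real_vector \<Rightarrow> real"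
  assumes "linear l" "l \<noteq> (\<lambda>_. 0)"
  obtains e where "l e > 0"
proof -
  obtain z where z: "l z \<noteq> 0" using assms by auto
  show ?thesis
  proof (cases "l z > 0")
    case True then show ?thesis using that by blast
  next
    case False
    then have "l (-z) > 0" using z assms(1) by (simp add: linear_neg)
    then show ?thesis using that by blast
  qed
qed

definition hs :: "('a::euclidean_space \<Rightarrow> real) \<Rightarrow> 'a set" where
  "hs l = sphere 0 1 \<inter> {x. l x > 0}"

lemma hs_meet:
  fixes l0 la lb :: "'a::euclidean_space \<Rightarrow> real"
  assumes "linear l0" "linear la" "linear lb" "l0 y > 0" "la y > 0" "lb y > 0"
  shows "(hs l0 \<inter> hs la) \<inter> (hs l0 \<inter> hs lb) \<noteq> {}"
proof -
  have y0: "y \<noteq> 0" using assms(1,4) linear_0 by force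
  define z where "z = (1 / norm y) *\<^sub>R y"
  have n: "norm y > 0" using y0 by simp
  have "z \<in> sphere 0 1" unfolding z_def using y0 by simp
  moreover have "l0 z > 0" "la z > 0" "lb z > 0" unfolding z_def using assms n
    by (simp_all add: linear_scale)
  ultimately show ?thesis unfolding hs_def by blast
qed

lemma hemi_core:
  fixes l0 l1 l2 l3 :: "'a::euclidean_space \<Rightarrow> real"
  assumes lin: "linear l0" "linear l1" "linear l2" "linear l3" and l0: "l0 \<noteq> (\<lambda>_. 0)"
    and ne: "hs l0 \<inter> hs l1 \<noteq> {}" "hs l0 \<inter> hs l2 \<noteq> {}" "hs l0 \<inter> hs l3 \<noteq> {}"
    and dj: "(hs l0 \<inter> hs l1) \<inter> (hs l0 \<inter> hs l2) = {}"
       "(hs l0 \<inter> hs l1) \<inter> (hs l0 \<inter> hs l3) = {}"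
       "(hs l0 \<inter> hs l2) \<inter> (hs l0 \<inter> hs l3) = {}"
  shows False
proof -
  obtain e where e: "l0 e > 0" using pos_vec[OF lin(1) l0] by blast
  define K where "K = {x. l0 x = 0}"
  have K: "subspace K" unfolding K_def
    using lin(1) by (auto simp: subspace_def linear_add linear_scale linear_0)
  have disj: "\<forall>x\<in>K. \<not> (la x > 0 \<and> lb x > 0)"
    if "linear la" "linear lb" "(hs l0 \<inter> hs la) \<inter> (hs l0 \<inter> hs lb) = {}" for la lb
  proof (intro ballI notI)
    fix x assume x: "x \<in> K" "la x > 0 \<and> lb x > 0"
    have "eventually (\<lambda>t. la x * t + la e > 0) at_top" using x by (intro ev_lin) auto
    moreover have "eventually (\<lambda>t. lb x * t + lb e > 0) at_top" using x by (intro ev_lin) auto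
    ultimately obtain t where t: "la x * t + la e > 0" "lb x * t + lb e > 0" by (rule ev_both)
    define y where "y = t *\<^sub>R x + e"
    have "l0 y > 0" "la y > 0" "lb y > 0" using t e x lin that unfolding y_def K_def
      by (simp_all add: linear_add linear_scale mult.commute)
    then show False using hs_meet[OF lin(1) that(1,2)] that(3) by blast
  qed
  have nonemp: "\<exists>x\<in>K. la x > 0"
    if th: "linear la" "linear lb" "hs l0 \<inter> hs la \<noteq> {}" "hs l0 \<inter> hs lb \<noteq> {}"
       "(hs l0 \<inter> hs la) \<inter> (hs l0 \<inter> hs lb) = {}" for la lb
  proof (rule ccontr)
    assume "\<not> (\<exists>x\<in>K. la x > 0)"
    hence z: "\<forall>x\<in>K. la x = 0"
    proof (intro ballI)
      fix x assume nx: "\<not> (\<exists>x\<in>K. la x > 0)" and x: "x \<in> K"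
      have "-x \<in> K" using K x by (simp add: subspace_neg)
      hence "\<not> la (-x) > 0" "\<not> la x > 0" using nx x by auto
      thus "la x = 0" using th(1) by (simp add: linear_neg)
    qed
    have dec: "la y = (l0 y / l0 e) * la e" for y
    proof -
      have "y - (l0 y / l0 e) *\<^sub>R e \<in> K" unfolding K_def using e lin(1)
        by (simp add: linear_diff linear_scale)
      hence "la (y - (l0 y / l0 e) *\<^sub>R e) = 0" using z by blast
      thus ?thesis using th(1) by (simp add: linear_diff linear_scale)
    qed
    obtain y where y: "y \<in> hs l0" "y \<in> hs la" using th(3) by blast
    have "l0 y > 0" "la y > 0" using y unfolding hs_def by auto
    hence "l0 y / l0 e > 0" "(l0 y / l0 e) * la e > 0" using dec[of y] e by auto
    hence lae: "la e > 0" using zero_less_mult_pos by blast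
    obtain w where w: "w \<in> hs l0" "w \<in> hs lb" using th(4) by blast
    have "l0 w > 0" using w unfolding hs_def by auto
    hence "la w > 0" using dec[of w] e lae by simp
    hence "w \<in> hs la" using w unfolding hs_def by auto
    thus False using w th(5) by blast
  qed
  have dj': "(hs l0 \<inter> hs l2) \<inter> (hs l0 \<inter> hs l1) = {}" "(hs l0 \<inter> hs l3) \<inter> (hs l0 \<inter> hs l1) = {}"
    using dj by blast+
  obtain x1 where "x1 \<in> K" "l1 x1 > 0" using nonemp[OF lin(2,3) ne(1,2) dj(1)] by blast
  moreover obtain x2 where "x2 \<in> K" "l2 x2 > 0" using nonemp[OF lin(3,2) ne(2,1) dj'(1)] by blast
  moreover obtain x3 where "x3 \<in> K" "l3 x3 > 0" using nonemp[OF lin(4,2) ne(3,1) dj'(2)] by blast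
  ultimately show False
    using three_halfspaces[OF K lin(2,3,4)] disj[OF lin(2,3) dj(1)] disj[OF lin(2,4) dj(2)] disj[OF lin(3,4) dj(3)]
    by blast
qed



definition Pp :: "('a::euclidean_space \<times> 'b::euclidean_space) \<Rightarrow> ('a\<times>'b) set" where
  "Pp v = {w\<in>EinT. bform v w > 0}"

lemma chart_exists:
  fixes v :: "'a::euclidean_space \<times> 'b::euclidean_space"
  assumes "v \<noteq> 0" "bform v v = 0"
  shows "\<exists>u. bform u u = 0 \<and> bform v u = 1 \<and>
     (DIM('b) \<ge> 2 \<longrightarrow> (\<exists>n. bform u n = 0 \<and> bform v n = 0 \<and> bform n n < 0)) \<and>
     (DIM('a) \<ge> 2 \<longrightarrow> (\<exists>n. bform u n = 0 \<and> bform v n = 0 \<and> bform n n > 0))"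
proof -
  obtain \<alpha> \<beta> where v: "v = (\<alpha>, \<beta>)" by (cases v)
  have ab: "\<alpha> \<bullet> \<alpha> = \<beta> \<bullet> \<beta>" using assms(2) v by (simp add: bform_def)
  have a0: "\<alpha> \<noteq> 0"
  proof
    assume "\<alpha> = 0"
    hence "\<beta> = 0" using ab by simp
    thus False using assms(1) v \<open>\<alpha> = 0\<close> by (simp add: zero_prod_def)
  qed
  have aa: "\<alpha> \<bullet> \<alpha> > 0" using a0 by simp
  define u where "u = ((1/(2*(\<alpha>\<bullet>\<alpha>))) *\<^sub>R \<alpha>, - ((1/(2*(\<beta>\<bullet>\<beta>))) *\<^sub>R \<beta>))"
  have "bform u u = 0" unfolding u_def bform_def using ab by (simp add: power2_eq_square)
  moreover have "bform v u = 1" unfolding u_def bform_def v using ab aa by simp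
  moreover have "\<exists>n. bform u n = 0 \<and> bform v n = 0 \<and> bform n n < 0" if d: "DIM('b) \<ge> 2"
  proof -
    obtain y where y: "y \<noteq> 0" "orthogonal \<beta> y" using orthogonal_to_vector_exists[OF d] by blast
    have "\<beta> \<bullet> y = 0" using y orthogonal_def by blast
    thus ?thesis using y
      by (intro exI[of _ "(0,y)"]) (simp add: u_def v bform_def)
  qed
  moreover have "\<exists>n. bform u n = 0 \<and> bform v n = 0 \<and> bform n n > 0" if d: "DIM('a) \<ge> 2"
  proof -
    obtain y where y: "y \<noteq> 0" "orthogonal \<alpha> y" using orthogonal_to_vector_exists[OF d] by blast
    have "\<alpha> \<bullet> y = 0" using y orthogonal_def by blast
    thus ?thesis using y
      by (intro exI[of _ "(y,0)"]) (simp add: u_def v bform_def)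
  qed
  ultimately show ?thesis by blast
qed

definition W :: "('a::euclidean_space \<times> 'b::euclidean_space) \<Rightarrow> ('a\<times>'b) \<Rightarrow> ('a\<times>'b) set" where
  "W v u = {x. bform u x = 0 \<and> bform v x = 0}"

definition phi :: "('a::euclidean_space \<times> 'b::euclidean_space) \<Rightarrow> ('a\<times>'b) \<Rightarrow> ('a\<times>'b) \<Rightarrow> ('a\<times>'b)" where
  "phi v u x = u + x - (bform x x / 2) *\<^sub>R v"

lemma subspace_W: "subspace (W v u)"
  unfolding W_def subspace_def by simp

lemma phi_iso:
  assumes "bform v v = 0" "bform u u = 0" "bform v u = 1" "x \<in> W v u"
  shows "bform (phi v u x) (phi v u x) = 0" "bform v (phi v u x) = 1"
proof -
  have f0: "bform u x = 0" "bform v x = 0" using assms(4) unfolding W_def by auto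
  have f: "bform u x = 0" "bform v x = 0" "bform x u = 0" "bform x v = 0" "bform u v = 1"
    using f0 assms(3) bform_sym[of x u] bform_sym[of x v] bform_sym[of u v] by auto
  show "bform (phi v u x) (phi v u x) = 0" unfolding phi_def using f assms
    by (simp add: algebra_simps)
  show "bform v (phi v u x) = 1" unfolding phi_def using f assms by simp
qed

lemma phi_form: "bform a (phi v u x) = bform a u + bform a x - bform x x / 2 * bform a v"
  unfolding phi_def by simp

lemma phi_surj:
  assumes "bform v v = 0" "bform u u = 0" "bform v u = 1" "bform w w = 0" "bform v w = k" "k > 0"
  shows "\<exists>x\<in>W v u. phi v u x = (1/k) *\<^sub>R w"
proof -
  define w' where "w' = (1/k) *\<^sub>R w"
  have w': "bform w' w' = 0" "bform v w' = 1" unfolding w'_def using assms by simp_all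
  define c where "c = bform u w'"
  define x where "x = w' - u - c *\<^sub>R v"
  have s: "bform u v = 1" "bform w' v = 1" "bform w' u = c" using assms w' bform_sym c_def by metis+
  have xW: "x \<in> W v u" unfolding W_def x_def using assms w' s c_def by simp
  have "bform x x = - 2 * c" unfolding x_def using assms w' s c_def bform_sym[of u w']
    by (simp add: algebra_simps)
  hence "phi v u x = w'" unfolding phi_def x_def by simp
  thus ?thesis using xW w'_def by blast
qed

lemma Pp_image:
  assumes "bform v v = 0" "bform u u = 0" "bform v u = 1"
  shows "Pp v = (\<lambda>x. (1 / norm (phi v u x)) *\<^sub>R phi v u x) ` W v u"
proof
  show "Pp v \<subseteq> (\<lambda>x. (1 / norm (phi v u x)) *\<^sub>R phi v u x) ` W v u"
  proof
    fix w assume "w \<in> Pp v"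
    hence w: "bform w w = 0" "norm w = 1" "bform v w > 0" unfolding Pp_def EinT_def by auto
    obtain x where x: "x \<in> W v u" "phi v u x = (1/bform v w) *\<^sub>R w"
      using phi_surj[OF assms w(1) refl w(3)] by blast
    have "norm (phi v u x) = 1 / bform v w" using x(2) w by simp
    hence "(1 / norm (phi v u x)) *\<^sub>R phi v u x = w" using x(2) w by simp
    thus "w \<in> (\<lambda>x. (1 / norm (phi v u x)) *\<^sub>R phi v u x) ` W v u" using x(1) by force
  qed
next
  show "(\<lambda>x. (1 / norm (phi v u x)) *\<^sub>R phi v u x) ` W v u \<subseteq> Pp v"
  proof
    fix w assume "w \<in> (\<lambda>x. (1 / norm (phi v u x)) *\<^sub>R phi v u x) ` W v u"
    then obtain x where x: "x \<in> W v u" "w = (1 / norm (phi v u x)) *\<^sub>R phi v u x" by blast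
    have p: "bform (phi v u x) (phi v u x) = 0" "bform v (phi v u x) = 1"
      using phi_iso[OF assms x(1)] by auto
    hence nz: "phi v u x \<noteq> 0" by auto
    hence "norm w = 1" using x(2) by simp
    moreover have "bform w w = 0" using x(2) p by simp
    moreover have "bform v w > 0" using x(2) p nz by simp
    ultimately show "w \<in> Pp v" unfolding Pp_def EinT_def by simp
  qed
qed

lemma connected_Pp:
  assumes "v \<noteq> 0" "bform v v = 0"
  shows "connected (Pp v)"
proof -
  obtain u where u: "bform u u = 0" "bform v u = 1" using chart_exists[OF assms] by blast
  have "connected (W v u)" using subspace_W convex_connected subspace_imp_convex by blast
  moreover have "continuous_on (W v u) (\<lambda>x. (1 / norm (phi v u x)) *\<^sub>R phi v u x)"
  proof -
    have c: "continuous_on (W v u) (phi v u)" unfolding phi_def bform_def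
      by (intro continuous_intros) auto
    have "\<forall>x\<in>W v u. phi v u x \<noteq> 0" using phi_iso(2)[OF assms(2) u] by force
    hence "\<forall>x\<in>W v u. norm (phi v u x) \<noteq> 0" by simp
    thus ?thesis using c by (intro continuous_intros) auto
  qed
  ultimately show ?thesis using Pp_image[OF assms(2) u] connected_continuous_image by metis
qed

lemma preimage_Mx:
  "EinT \<inter> piX -` Mx v = {w\<in>EinT. bform v w \<noteq> 0}"
proof (rule set_eqI, rule iffI)
  fix w assume "w \<in> EinT \<inter> piX -` Mx v"
  hence w: "w \<in> EinT" "piX w \<in> Mx v" by auto
  then obtain w' where w': "w' \<noteq> 0" "span {w} = span {w'}" "bform v w' \<noteq> 0"
    unfolding piX_def Mx_def by auto
  have "w' \<in> span {w}" using w' span_base by blast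
  then obtain c where "w' = c *\<^sub>R w" unfolding span_singleton by auto
  thus "w \<in> {w\<in>EinT. bform v w \<noteq> 0}" using w' w by auto
next
  fix w assume "w \<in> {w\<in>EinT. bform v w \<noteq> 0}"
  hence w: "w \<in> EinT" "bform v w \<noteq> 0" by auto
  hence "w \<noteq> 0" unfolding EinT_def by auto
  hence "w \<noteq> 0 \<and> bform w w = 0 \<and> piX w = span {w} \<and> bform v w \<noteq> 0"
    using w unfolding piX_def EinT_def by auto
  hence "piX w \<in> Mx v" unfolding Mx_def by blast
  thus "w \<in> EinT \<inter> piX -` Mx v" using w by auto
qed

lemma patch_is_Pp:
  assumes "minkowski_patch (M :: ('a::euclidean_space \<times> 'b::euclidean_space) set)"
  shows "\<exists>v. v \<noteq> 0 \<and> bform v v = 0 \<and> M = Pp v"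
proof -
  obtain v w0 where v: "v \<noteq> 0" "bform v v = 0" and w0: "w0 \<in> EinT" "bform v w0 \<noteq> 0"
    and M: "M = connected_component_set {w\<in>EinT. bform v w \<noteq> 0} w0"
    using assms unfolding minkowski_patch_def preimage_Mx by blast
  obtain v' where v': "v' \<noteq> 0" "bform v' v' = 0" "bform v' w0 > 0"
    and S: "{w\<in>EinT. bform v w \<noteq> 0} = {w\<in>EinT. bform v' w \<noteq> 0}"
  proof (cases "bform v w0 > 0")
    case True then show ?thesis using that v by blast
  next
    case False
    hence "bform (-v) w0 > 0" using w0 by simp
    moreover have "{w\<in>EinT. bform v w \<noteq> 0} = {w\<in>EinT. bform (-v) w \<noteq> 0}" by simp
    ultimately show ?thesis using that[of "-v"] v by simp
  qed
  let ?S = "{w\<in>EinT. bform v' w \<noteq> 0}"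
  have M': "M = connected_component_set ?S w0" using M S by simp
  have "Pp v' \<subseteq> M" unfolding M'
    by (rule connected_component_maximal) (use v' w0 connected_Pp[OF v'(1,2)] in \<open>auto simp: Pp_def\<close>)
  moreover have "M \<subseteq> Pp v'"
  proof
    fix w assume wM: "w \<in> M"
    have sub: "M \<subseteq> ?S" unfolding M' by (rule connected_component_subset)
    have w0M: "w0 \<in> M" unfolding M' using w0 v' by auto
    have conn: "connected M" unfolding M' by simp
    show "w \<in> Pp v'"
    proof (rule ccontr)
      assume "w \<notin> Pp v'"
      hence "bform v' w < 0" using sub wM unfolding Pp_def by force
      have "connected ((\<lambda>x. bform v' x) ` M)"
        using conn continuous_on_bform connected_continuous_image by blast
      hence iv: "is_interval ((\<lambda>x. bform v' x) ` M)" using is_interval_connected_1 by blast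
      have "bform v' w \<in> (\<lambda>x. bform v' x) ` M" "bform v' w0 \<in> (\<lambda>x. bform v' x) ` M"
        using wM w0M by auto
      hence "0 \<in> (\<lambda>x. bform v' x) ` M"
        using iv \<open>bform v' w < 0\<close> v'(3) unfolding is_interval_1 by (meson less_eq_real_def)
      thus False using sub by force
    qed
  qed
  ultimately show ?thesis using v' by blast
qed



lemma mink_core:
  fixes v0 v1 v2 v3 :: "'a::euclidean_space \<times> 'b::euclidean_space"
  assumes dims: "DIM('a) \<ge> 2" "DIM('b) \<ge> 2" and v0: "v0 \<noteq> 0" "bform v0 v0 = 0"
    and ne: "Pp v0 \<inter> Pp v1 \<noteq> {}" "Pp v0 \<inter> Pp v2 \<noteq> {}" "Pp v0 \<inter> Pp v3 \<noteq> {}"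
    and dj: "(Pp v0 \<inter> Pp v1) \<inter> (Pp v0 \<inter> Pp v2) = {}"
       "(Pp v0 \<inter> Pp v1) \<inter> (Pp v0 \<inter> Pp v3) = {}"
       "(Pp v0 \<inter> Pp v2) \<inter> (Pp v0 \<inter> Pp v3) = {}"
  shows False
proof -
  obtain u n p where u: "bform u u = 0" "bform v0 u = 1"
    and n: "bform u n = 0" "bform v0 n = 0" "bform n n < 0"
    and p: "bform u p = 0" "bform v0 p = 0" "bform p p > 0"
    using chart_exists[OF v0] dims by blast
  let ?W = "W v0 u"
  have nW: "n \<in> ?W" "p \<in> ?W" using n p unfolding W_def by auto
  have SW: "subspace ?W" by (rule subspace_W)
  define g where "g a x = bform a (phi v0 u x)" for a x
  have gexp: "g a (t *\<^sub>R d) = (- bform d d * bform a v0 / 2) * t^2 + bform a d * t + bform a u" for a d t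
    unfolding g_def phi_form by (simp add: power2_eq_square algebra_simps)
  have Une: "\<exists>x\<in>?W. g a x > 0" if H: "Pp v0 \<inter> Pp a \<noteq> {}" for a
  proof -
    obtain w where w: "w \<in> Pp v0" "w \<in> Pp a" using H by blast
    hence w': "bform w w = 0" "bform v0 w > 0" "bform a w > 0" unfolding Pp_def EinT_def by auto
    obtain x where x: "x \<in> ?W" "phi v0 u x = (1 / bform v0 w) *\<^sub>R w"
      using phi_surj[OF v0(2) u w'(1) refl w'(2)] by blast
    have "g a x > 0" unfolding g_def x(2) using w' by simp
    thus ?thesis using x(1) by blast
  qed
  have meet: "(Pp v0 \<inter> Pp a) \<inter> (Pp v0 \<inter> Pp b) \<noteq> {}"
    if H: "x \<in> ?W" "g a x > 0" "g b x > 0" for a b x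
  proof -
    define z where "z = (1 / norm (phi v0 u x)) *\<^sub>R phi v0 u x"
    have zP: "z \<in> Pp v0" unfolding z_def Pp_image[OF v0(2) u] using H(1) by blast
    have "phi v0 u x \<noteq> 0" using phi_iso(2)[OF v0(2) u H(1)] by auto
    hence nz: "norm (phi v0 u x) > 0" by simp
    have "bform a z > 0" "bform b z > 0" using H nz unfolding z_def g_def by auto
    thus ?thesis using zP unfolding Pp_def by blast
  qed
  have NE: "\<not> (eventually (\<lambda>t. g a (t *\<^sub>R d) > 0) at_top \<and> eventually (\<lambda>t. g b (t *\<^sub>R d) > 0) at_top)"
    if H: "d \<in> ?W" "(Pp v0 \<inter> Pp a) \<inter> (Pp v0 \<inter> Pp b) = {}" for a b d
  proof
    assume "eventually (\<lambda>t. g a (t *\<^sub>R d) > 0) at_top \<and> eventually (\<lambda>t. g b (t *\<^sub>R d) > 0) at_top"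
    then obtain t where t: "g a (t *\<^sub>R d) > 0" "g b (t *\<^sub>R d) > 0" using ev_both by blast
    have "t *\<^sub>R d \<in> ?W" using SW H(1) by (simp add: subspace_scale)
    thus False using meet[OF _ t] H(2) by blast
  qed
  have T1: "eventually (\<lambda>t. g a (t *\<^sub>R d) > 0) at_top" if H: "bform a v0 > 0" "bform d d < 0" for a d
  proof -
    have "- bform d d * bform a v0 / 2 > 0" using H by (simp add: mult_neg_pos)
    thus ?thesis unfolding gexp by (rule ev_quad)
  qed
  have T2: "eventually (\<lambda>t. g a (t *\<^sub>R d) > 0) at_top" if H: "bform a v0 < 0" "bform d d > 0" for a d
  proof -
    have "- bform d d * bform a v0 / 2 > 0" using H by (simp add: mult_pos_neg)
    thus ?thesis unfolding gexp by (rule ev_quad)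
  qed
  have T3: "eventually (\<lambda>t. g a (t *\<^sub>R d) > 0) at_top" if H: "bform a v0 = 0" "bform a d > 0" for a d
    unfolding gexp using H by (simp add: ev_lin)
  have nonentire: "\<exists>e\<in>?W. bform a e > 0"
    if H: "bform a v0 = 0" "Pp v0 \<inter> Pp a \<noteq> {}" "Pp v0 \<inter> Pp b \<noteq> {}"
       "(Pp v0 \<inter> Pp a) \<inter> (Pp v0 \<inter> Pp b) = {}" for a b
  proof (rule ccontr)
    assume nx: "\<not> (\<exists>e\<in>?W. bform a e > 0)"
    have z: "bform a x = 0" if H: "x \<in> ?W" for x
    proof -
      have "-x \<in> ?W" using SW H by (simp add: subspace_neg)
      hence "\<not> bform a (-x) > 0" "\<not> bform a x > 0" using nx H by auto
      thus ?thesis by simp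
    qed
    have gc: "g a x = bform a u" if H: "x \<in> ?W" for x
      unfolding g_def phi_form using z[OF H] \<open>bform a v0 = 0\<close> by simp
    obtain x where "x \<in> ?W" "g a x > 0" using Une[OF H(2)] by blast
    hence au: "bform a u > 0" using gc by simp
    obtain y where y: "y \<in> ?W" "g b y > 0" using Une[OF H(3)] by blast
    have "g a y > 0" using gc[OF y(1)] au by simp
    thus False using meet[OF y(1) _ y(2)] H(4) by blast
  qed
  have conemeet: "\<exists>d\<in>?W. bform a d > 0 \<and> s * bform d d > 0"
    if H: "e \<in> ?W" "bform a e > 0" "m \<in> ?W" "s * bform m m > 0" for a s e m
  proof -
    define m' where "m' = (if bform a m \<ge> 0 then m else -m)"
    have m': "m' \<in> ?W" "bform a m' \<ge> 0" "bform m' m' = bform m m"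
      using H SW unfolding m'_def by (auto simp: subspace_neg)
    have "eventually (\<lambda>t. (s * bform m m) * t^2 + (2 * s * bform m' e) * t + s * bform e e > 0) at_top"
      using H(4) by (rule ev_quad)
    moreover have "eventually (\<lambda>t. t \<ge> (0::real)) at_top" by (rule eventually_ge_at_top)
    ultimately obtain t where t: "(s * bform m m) * t^2 + (2 * s * bform m' e) * t + s * bform e e > 0" "t \<ge> 0"
      by (rule ev_both)
    define d where "d = t *\<^sub>R m' + e"
    have dW: "d \<in> ?W" unfolding d_def using SW m' H by (simp add: subspace_add subspace_scale)
    have "s * bform d d = (s * bform m m) * t^2 + (2 * s * bform m' e) * t + s * bform e e"
      unfolding d_def using m'(3) bform_sym[of e m'] by (simp add: power2_eq_square algebra_simps)
    hence "s * bform d d > 0" using t by simp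
    moreover have "bform a d > 0"
    proof -
      have "t * bform a m' \<ge> 0" using t(2) m'(2) by simp
      thus ?thesis unfolding d_def using H(2) by simp
    qed
    ultimately show ?thesis using dW by blast
  qed
  have pair: "\<not> (bform a v0 > 0 \<and> bform b v0 > 0) \<and> \<not> (bform a v0 < 0 \<and> bform b v0 < 0)
      \<and> \<not> (bform a v0 = 0 \<and> bform b v0 \<noteq> 0)"
    if H: "Pp v0 \<inter> Pp a \<noteq> {}" "Pp v0 \<inter> Pp b \<noteq> {}"
       "(Pp v0 \<inter> Pp a) \<inter> (Pp v0 \<inter> Pp b) = {}" for a b
  proof (intro conjI notI)
    assume "bform a v0 > 0 \<and> bform b v0 > 0"
    thus False using NE[OF nW(1) H(3)] T1 n(3) by blast
  next
    assume "bform a v0 < 0 \<and> bform b v0 < 0"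
    thus False using NE[OF nW(2) H(3)] T2 p(3) by blast
  next
    assume h: "bform a v0 = 0 \<and> bform b v0 \<noteq> 0"
    obtain e where e: "e \<in> ?W" "bform a e > 0" using nonentire[OF _ H] h by blast
    show False
    proof (cases "bform b v0 > 0")
      case True
      obtain d where d: "d \<in> ?W" "bform a d > 0" "(-1) * bform d d > 0"
        using conemeet[OF e nW(1), of "-1"] n(3) by auto
      thus False using NE[OF d(1) H(3)] T3[of a d] T1[of b d] h True by auto
    next
      case False
      hence "bform b v0 < 0" using h by simp
      obtain d where d: "d \<in> ?W" "bform a d > 0" "1 * bform d d > 0"
        using conemeet[OF e nW(2), of 1] p(3) by auto
      thus False using NE[OF d(1) H(3)] T3[of a d] T2[of b d] h \<open>bform b v0 < 0\<close> by auto
    qed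
  qed
  have dj': "(Pp v0 \<inter> Pp v2) \<inter> (Pp v0 \<inter> Pp v1) = {}"
       "(Pp v0 \<inter> Pp v3) \<inter> (Pp v0 \<inter> Pp v1) = {}"
       "(Pp v0 \<inter> Pp v3) \<inter> (Pp v0 \<inter> Pp v2) = {}" using dj by blast+
  note p12 = pair[OF ne(1,2) dj(1)] and p21 = pair[OF ne(2,1) dj'(1)]
    and p13 = pair[OF ne(1,3) dj(2)] and p31 = pair[OF ne(3,1) dj'(2)]
    and p23 = pair[OF ne(2,3) dj(3)] and p32 = pair[OF ne(3,2) dj'(3)]
  have allzero: "bform v1 v0 = 0 \<and> bform v2 v0 = 0 \<and> bform v3 v0 = 0"
    using p12 p21 p13 p31 p23 p32 by (smt (verit))
  obtain e1 where e1: "e1 \<in> ?W" "bform v1 e1 > 0" using nonentire[OF _ ne(1,2) dj(1)] allzero by blast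
  obtain e2 where e2: "e2 \<in> ?W" "bform v2 e2 > 0" using nonentire[OF _ ne(2,1) dj'(1)] allzero by blast
  obtain e3 where e3: "e3 \<in> ?W" "bform v3 e3 > 0" using nonentire[OF _ ne(3,1) dj'(2)] allzero by blast
  have hd: "\<forall>x\<in>?W. \<not> (bform a x > 0 \<and> bform b x > 0)"
    if H: "bform a v0 = 0" "bform b v0 = 0" "(Pp v0 \<inter> Pp a) \<inter> (Pp v0 \<inter> Pp b) = {}" for a b
    using NE[OF _ H(3)] T3 H(1,2) by blast
  have h12: "\<forall>x\<in>?W. \<not> (bform v1 x > 0 \<and> bform v2 x > 0)" using hd[OF _ _ dj(1)] allzero by simp
  have h13: "\<forall>x\<in>?W. \<not> (bform v1 x > 0 \<and> bform v3 x > 0)" using hd[OF _ _ dj(2)] allzero by simp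
  have h23: "\<forall>x\<in>?W. \<not> (bform v2 x > 0 \<and> bform v3 x > 0)" using hd[OF _ _ dj(3)] allzero by simp
  show False
    by (rule three_halfspaces[OF SW linear_bform linear_bform linear_bform e1 e2 e3 h12 h13 h23])
qed


theorem lemma3p7:
  shows
   "(\<forall>(H0::'a::euclidean_space set) (H::'i \<Rightarrow> 'a set) (I::'i set).
       hemisphere H0 \<and> (\<forall>i\<in>I. hemisphere (H i) \<and> H0 \<inter> H i \<noteq> {}) \<and>
       (\<forall>i\<in>I. \<forall>j\<in>I. i \<noteq> j \<longrightarrow> (H0 \<inter> H i) \<inter> (H0 \<inter> H j) = {})
       \<longrightarrow> finite I \<and> card I \<le> 2)
  \<and> ((DIM('p::euclidean_space) \<ge> 3 \<and> DIM('q::euclidean_space) \<ge> 3) \<longrightarrow>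
     (\<forall>(M0::('p \<times> 'q) set) (M::'j \<Rightarrow> ('p \<times> 'q) set) (I::'j set).
       minkowski_patch M0 \<and> (\<forall>i\<in>I. minkowski_patch (M i) \<and> M0 \<inter> M i \<noteq> {}) \<and>
       (\<forall>i\<in>I. \<forall>j\<in>I. i \<noteq> j \<longrightarrow> (M0 \<inter> M i) \<inter> (M0 \<inter> M j) = {})
       \<longrightarrow> finite I \<and> card I \<le> 2))"
proof (rule conjI)
  show "\<forall>(H0::'a::euclidean_space set) (H::'i \<Rightarrow> 'a set) (I::'i set).
       hemisphere H0 \<and> (\<forall>i\<in>I. hemisphere (H i) \<and> H0 \<inter> H i \<noteq> {}) \<and>
       (\<forall>i\<in>I. \<forall>j\<in>I. i \<noteq> j \<longrightarrow> (H0 \<inter> H i) \<inter> (H0 \<inter> H j) = {})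
       \<longrightarrow> finite I \<and> card I \<le> 2"
  proof (intro allI impI)
    fix H0 :: "'a set" and H :: "'i \<Rightarrow> 'a set" and I :: "'i set"
    assume a: "hemisphere H0 \<and> (\<forall>i\<in>I. hemisphere (H i) \<and> H0 \<inter> H i \<noteq> {}) \<and>
       (\<forall>i\<in>I. \<forall>j\<in>I. i \<noteq> j \<longrightarrow> (H0 \<inter> H i) \<inter> (H0 \<inter> H j) = {})"
    show "finite I \<and> card I \<le> 2"
    proof (rule ccontr)
      assume "\<not> (finite I \<and> card I \<le> 2)"
      hence "\<exists>i j k. i\<in>I \<and> j\<in>I \<and> k\<in>I \<and> i\<noteq>j \<and> i\<noteq>k \<and> j\<noteq>k" by (rule three_of)
      then obtain i j k where ijk: "i\<in>I" "j\<in>I" "k\<in>I" "i\<noteq>j" "i\<noteq>k" "j\<noteq>k"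
        by auto
      have a1: "hemisphere H0" and a2: "\<forall>i\<in>I. hemisphere (H i) \<and> H0 \<inter> H i \<noteq> {}"
        and a3: "\<forall>i\<in>I. \<forall>j\<in>I. i \<noteq> j \<longrightarrow> (H0 \<inter> H i) \<inter> (H0 \<inter> H j) = {}"
        using a by blast+
      have hs: "\<exists>l. linear l \<and> l \<noteq> (\<lambda>_. 0) \<and> G = hs l" if "hemisphere G" for G :: "'a set"
        using that unfolding hemisphere_def hs_def by blast
      have hh: "hemisphere (H i)" "hemisphere (H j)" "hemisphere (H k)" using a2 ijk(1-3) by blast+
      obtain l0 where l0: "linear l0" "l0 \<noteq> (\<lambda>_. 0)" "H0 = hs l0" using hs[OF a1] by blast
      obtain l1 where l1: "linear l1" "H i = hs l1" using hs[OF hh(1)] by blast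
      obtain l2 where l2: "linear l2" "H j = hs l2" using hs[OF hh(2)] by blast
      obtain l3 where l3: "linear l3" "H k = hs l3" using hs[OF hh(3)] by blast
      have ne: "H0 \<inter> H i \<noteq> {}" "H0 \<inter> H j \<noteq> {}" "H0 \<inter> H k \<noteq> {}" using a2 ijk(1-3) by blast+
      have dj: "(H0 \<inter> H i) \<inter> (H0 \<inter> H j) = {}" "(H0 \<inter> H i) \<inter> (H0 \<inter> H k) = {}"
        "(H0 \<inter> H j) \<inter> (H0 \<inter> H k) = {}" using a3 ijk by blast+
      show False
        by (rule hemi_core[OF l0(1) l1(1) l2(1) l3(1) l0(2) ne[unfolded l0(3) l1(2) l2(2) l3(2)]
              dj[unfolded l0(3) l1(2) l2(2) l3(2)]])
    qed
  qed
next
  show "(DIM('p::euclidean_space) \<ge> 3 \<and> DIM('q::euclidean_space) \<ge> 3) \<longrightarrow>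
     (\<forall>(M0::('p \<times> 'q) set) (M::'j \<Rightarrow> ('p \<times> 'q) set) (I::'j set).
       minkowski_patch M0 \<and> (\<forall>i\<in>I. minkowski_patch (M i) \<and> M0 \<inter> M i \<noteq> {}) \<and>
       (\<forall>i\<in>I. \<forall>j\<in>I. i \<noteq> j \<longrightarrow> (M0 \<inter> M i) \<inter> (M0 \<inter> M j) = {})
       \<longrightarrow> finite I \<and> card I \<le> 2)"
  proof (intro allI impI)
    fix M0 :: "('p \<times> 'q) set" and M :: "'j \<Rightarrow> ('p \<times> 'q) set" and I :: "'j set"
    assume d: "DIM('p) \<ge> 3 \<and> DIM('q) \<ge> 3"
    assume a: "minkowski_patch M0 \<and> (\<forall>i\<in>I. minkowski_patch (M i) \<and> M0 \<inter> M i \<noteq> {}) \<and>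
       (\<forall>i\<in>I. \<forall>j\<in>I. i \<noteq> j \<longrightarrow> (M0 \<inter> M i) \<inter> (M0 \<inter> M j) = {})"
    show "finite I \<and> card I \<le> 2"
    proof (rule ccontr)
      assume "\<not> (finite I \<and> card I \<le> 2)"
      hence "\<exists>i j k. i\<in>I \<and> j\<in>I \<and> k\<in>I \<and> i\<noteq>j \<and> i\<noteq>k \<and> j\<noteq>k" by (rule three_of)
      then obtain i j k where ijk: "i\<in>I" "j\<in>I" "k\<in>I" "i\<noteq>j" "i\<noteq>k" "j\<noteq>k"
        by auto
      have a1: "minkowski_patch M0" and a2: "\<forall>i\<in>I. minkowski_patch (M i) \<and> M0 \<inter> M i \<noteq> {}"
        and a3: "\<forall>i\<in>I. \<forall>j\<in>I. i \<noteq> j \<longrightarrow> (M0 \<inter> M i) \<inter> (M0 \<inter> M j) = {}"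
        using a by blast+
      have hh: "minkowski_patch (M i)" "minkowski_patch (M j)" "minkowski_patch (M k)" using a2 ijk(1-3) by blast+
      obtain v0 where v0: "v0 \<noteq> 0" "bform v0 v0 = 0" "M0 = Pp v0" using patch_is_Pp[OF a1] by blast
      obtain v1 where v1: "M i = Pp v1" using patch_is_Pp[OF hh(1)] by blast
      obtain v2 where v2: "M j = Pp v2" using patch_is_Pp[OF hh(2)] by blast
      obtain v3 where v3: "M k = Pp v3" using patch_is_Pp[OF hh(3)] by blast
      have dd: "DIM('p) \<ge> 2" "DIM('q) \<ge> 2" using d by auto
      have ne: "M0 \<inter> M i \<noteq> {}" "M0 \<inter> M j \<noteq> {}" "M0 \<inter> M k \<noteq> {}" using a2 ijk(1-3) by blast+
      have dj: "(M0 \<inter> M i) \<inter> (M0 \<inter> M j) = {}" "(M0 \<inter> M i) \<inter> (M0 \<inter> M k) = {}"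
        "(M0 \<inter> M j) \<inter> (M0 \<inter> M k) = {}" using a3 ijk by blast+
      show False
        by (rule mink_core[OF dd v0(1,2) ne[unfolded v0(3) v1 v2 v3] dj[unfolded v0(3) v1 v2 v3]])
    qed
  qed
qed


end
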